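(* For every $\lambda\in\mathbb{C}$ and every integer $m\ge1$, in $\mathcal{A}_0$ we have $$a^m=Q_{m-1}(\lambda)(a-\lambda b)+R_m(\lambda),$$ where $Q_{m-1}(\lambda)=\sum_{j=0}^{m-1}\lambda(\lambda+1)\cdots(\lambda+j-1)\,a^{m-1-j}b^j=a^{m-1}+\lambda a^{m-2}b+\dots+\lambda(\lambda+1)\cdots(\lambda+m-2)b^{m-1}$ (the $j=0$ coefficient being $1$) and $R_m(\lambda)=\lambda(\lambda+1)\cdots(\lambda+m-1)b^m$.
   Context: $\mathcal{A}_0$ is the $\mathbb{C}$-algebra of polynomials in two variables $a,b$ subject to the commutation relation $ab-ba=b^2$. *)

theory Defs
  imports Complex_Main
begin

text \<open>A complex algebra structure on a ring 'a is given by a ring homomorphism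
  from the complex numbers into the centre of 'a.\<close>
definition complex_structure :: "(complex \<Rightarrow> 'a::ring_1) \<Rightarrow> bool" where
  "complex_structure emb \<longleftrightarrow>
     (\<forall>x y. emb (x + y) = emb x + emb y) \<and> (\<forall>x y. emb (x * y) = emb x * emb y) \<and>
     emb 1 = 1 \<and> (\<forall>c y. emb c * y = y * emb c)"

end

theory Submission
  imports Defs
begin

lemma bpow_a:
  fixes a b :: "'a::ring_1"
  assumes "a * b - b * a = b ^ 2"
  shows "b ^ j * a = a * b ^ j - of_nat j * b ^ Suc j"
proof (induction j)
  case 0 then show ?case by simp
next
  case (Suc j)
  have ba: "b * a = a * b - b * b" using assms by (simp add: power2_eq_square algebra_simps)
  have "b ^ Suc j * a = b ^ j * (b * a)" by (simp only: power_Suc2 mult.assoc)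
  also have "... = b ^ j * a * b - b ^ Suc (Suc j)" unfolding ba
    by (simp only: right_diff_distrib power_Suc2 mult.assoc)
  also have "... = (a * b ^ j - of_nat j * b ^ Suc j) * b - b ^ Suc (Suc j)" using Suc by simp
  also have "... = a * b ^ Suc j - (of_nat j * b ^ Suc (Suc j) + b ^ Suc (Suc j))"
    by (simp only: left_diff_distrib mult.assoc power_Suc2[symmetric] diff_diff_eq)
  also have "... = a * b ^ Suc j - of_nat (Suc j) * b ^ Suc (Suc j)"
    by (simp only: of_nat_Suc distrib_right mult_1_left add.commute)
  finally show ?case .
qed

lemma emb_of_nat:
  assumes "complex_structure emb"
  shows "emb (of_nat n) = of_nat n"
proof -
  have add: "\<And>x y. emb (x + y) = emb x + emb y" and one: "emb 1 = 1"
    using assms unfolding complex_structure_def by blast+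
  show ?thesis by (induction n) (simp_all only: of_nat_Suc add one of_nat_0, metis add add_cancel_right_right of_nat_0)
qed

theorem lemma1p2p2:
  fixes emb :: "complex \<Rightarrow> 'a::ring_1" and a b :: 'a and lam :: complex and m :: nat
  assumes "complex_structure emb"
    and "a * b - b * a = b ^ 2"
    and "m \<ge> 1"
  shows "a ^ m = (\<Sum>j<m. emb (pochhammer lam j) * a ^ (m - 1 - j) * b ^ j) * (a - emb lam * b)
                 + emb (pochhammer lam m) * b ^ m"
proof -
  have add: "\<And>x y. emb (x + y) = emb x + emb y" and mul: "\<And>x y. emb (x * y) = emb x * emb y"
    and one: "emb 1 = 1" and cen: "\<And>c y. emb c * y = y * emb c"
    using assms(1) unfolding complex_structure_def by blast+
  obtain n where m: "m = Suc n" using assms(3) by (cases m) auto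
  define T where "T j = emb (pochhammer lam j) * a ^ (Suc n - j) * b ^ j" for j
  have step: "emb (pochhammer lam j) * a ^ (n - j) * b ^ j * (a - emb lam * b) = T j - T (Suc j)"
    if "j < Suc n" for j
  proof -
    let ?p = "emb (pochhammer lam j)"
    let ?A = "a ^ (n - j)" and ?B = "b ^ Suc j"
    have sj: "Suc n - j = Suc (n - j)" using that by simp
    have e1: "?A * (b ^ j * a) = a ^ (Suc n - j) * b ^ j - of_nat j * (?A * ?B)"
    proof -
      have "?A * (b ^ j * a) = ?A * (a * b ^ j - of_nat j * ?B)"
        by (simp only: bpow_a[OF assms(2)])
      also have "... = ?A * a * b ^ j - ?A * of_nat j * ?B"
        by (simp only: right_diff_distrib mult.assoc)
      also have "... = a ^ (Suc n - j) * b ^ j - of_nat j * (?A * ?B)"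
        by (simp only: sj power_Suc2 mult_of_nat_commute[of j ?A, symmetric] mult.assoc)
      finally show ?thesis .
    qed
    have e2: "?A * (b ^ j * (emb lam * b)) = emb lam * (?A * ?B)"
    proof -
      have "?A * (b ^ j * (emb lam * b)) = ?A * (b ^ j * (b * emb lam))" by (simp only: cen)
      also have "... = ?A * ?B * emb lam" by (simp only: power_Suc2 mult.assoc)
      also have "... = emb lam * (?A * ?B)" by (simp only: cen)
      finally show ?thesis .
    qed
    have pS: "emb (pochhammer lam (Suc j)) = ?p * (emb lam + of_nat j)"
    proof -
      have "emb (pochhammer lam (Suc j)) = emb (lam + of_nat j) * ?p"
        by (simp only: pochhammer_rec' mul)
      also have "... = ?p * emb (lam + of_nat j)" by (rule cen)
      also have "... = ?p * (emb lam + of_nat j)" by (simp only: add emb_of_nat[OF assms(1)])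
      finally show ?thesis .
    qed
    have "?p * ?A * b ^ j * (a - emb lam * b)
        = ?p * (?A * (b ^ j * a)) - ?p * (?A * (b ^ j * (emb lam * b)))"
      by (simp only: right_diff_distrib mult.assoc)
    also have "... = ?p * (a ^ (Suc n - j) * b ^ j) - ?p * (emb lam + of_nat j) * (?A * ?B)"
      by (simp only: e1 e2 right_diff_distrib distrib_left distrib_right mult.assoc diff_diff_eq add.commute)
    also have "... = T j - T (Suc j)" unfolding pS T_def
      by (simp only: mult.assoc diff_Suc_Suc)
    finally show ?thesis .
  qed
  have "(\<Sum>j<m. emb (pochhammer lam j) * a ^ (m - 1 - j) * b ^ j) * (a - emb lam * b)
      = (\<Sum>j<Suc n. T j - T (Suc j))"
    unfolding m sum_distrib_right by (intro sum.cong) (auto simp: step)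
  also have "... = T 0 - T (Suc n)" by (rule sum_lessThan_telescope')
  also have "... = a ^ m - emb (pochhammer lam m) * b ^ m" by (simp add: T_def one m)
  finally show ?thesis by simp
qed

end
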